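(* Let $A\in s(3)$. Then $A$ is indivisible in $s(3)$ if and only if there exist $3\times3$ permutation matrices $P,Q$ such that $$P\operatorname{sgn}(A)Q=\begin{pmatrix}0&1&1\\1&0&1\\1&1&0\end{pmatrix}.$$
   Context: $s(3)$ denotes the set of $3\times 3$ real matrices with non-negative entries whose columns each sum to $1$, a monoid under matrix multiplication whose group of units is the set of permutation matrices. $\operatorname{sgn}$ is applied entrywise ($\operatorname{sgn}(x)=1$ for $x>0$, $\operatorname{sgn}(0)=0$). $A\in s(3)$ is indivisible if for every decomposition $A=BC$ with $B,C\in s(3)$ exactly one of $B,C$ is a permutation matrix. *)

theory Defs
  imports "HOL-Analysis.Analysis"
begin

text \<open>Column-stochastic 3x3 real matrices: non-negative entries, each column sums to 1.
  Entry (i,j) of a matrix M :: real^3^3 is M $ i $ j (row i, column j).\<close>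
definition s3 :: "(real^3^3) set" where
  "s3 = {M. (\<forall>i j. M $ i $ j \<ge> 0) \<and> (\<forall>j. (\<Sum>i\<in>UNIV. M $ i $ j) = 1)}"

definition perm_mat :: "real^3^3 \<Rightarrow> bool" where
  "perm_mat P \<longleftrightarrow> (\<exists>p. p permutes (UNIV :: 3 set) \<and>
      P = (\<chi> i j. if i = p j then 1 else 0))"

definition sgn_mat :: "real^3^3 \<Rightarrow> real^3^3" where
  "sgn_mat A = (\<chi> i j. sgn (A $ i $ j))"

definition indivisible :: "real^3^3 \<Rightarrow> bool" where
  "indivisible A \<longleftrightarrow> (\<forall>B\<in>s3. \<forall>C\<in>s3. A = B ** C \<longrightarrow>
      ((perm_mat B \<and> \<not> perm_mat C) \<or> (\<not> perm_mat B \<and> perm_mat C)))"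

definition J0 :: "real^3^3" where
  "J0 = (\<chi> i j. if i = j then 0 else 1)"

end

theory Submission
  imports Defs
begin

lemma d3: "(1::3) \<noteq> 2" "(1::3) \<noteq> 3" "(2::3) \<noteq> 3" "(2::3) \<noteq> 1" "(3::3) \<noteq> 1" "(3::3) \<noteq> 2"
  by simp_all

lemma ex1_3: "(\<exists>!i::3. P i) \<longleftrightarrow> (P 1 \<and> \<not>P 2 \<and> \<not>P 3) \<or> (\<not>P 1 \<and> P 2 \<and> \<not>P 3) \<or> (\<not>P 1 \<and> \<not>P 2 \<and> P 3)"
  by (smt (verit) d3 exhaust_3)

lemma exists_3: "(\<exists>i::3. P i) \<longleftrightarrow> P 1 \<or> P 2 \<or> P 3"
  by (metis exhaust_3)

definition PP :: "(3 \<Rightarrow> 3 \<Rightarrow> bool) \<Rightarrow> bool" where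
  "PP x \<longleftrightarrow> (\<forall>k. \<exists>!i. x i k) \<and> (\<forall>i. \<exists>k. x i k)"

lemma core1:
  fixes x y z :: "3 \<Rightarrow> 3 \<Rightarrow> bool"
  assumes "\<forall>j. \<exists>k. y k j" "\<forall>k. \<exists>i. x i k" "\<forall>i j. z i j \<longleftrightarrow> \<not>(\<exists>k. x i k \<and> y k j)"
    "\<forall>j. \<exists>!i. z i j" "\<forall>i. \<exists>j. z i j"
  shows "(PP x \<and> \<not>PP y) \<or> (\<not>PP x \<and> PP y)"
  using assms unfolding PP_def ex1_3 exists_3 forall_3
  by satx

lemma core2:
  fixes x :: "3 \<Rightarrow> 3 \<Rightarrow> bool"
  assumes "\<forall>j. \<exists>i. x i j" "\<not> PP x" "\<forall>j k. j \<noteq> k \<longrightarrow> \<not>(\<forall>i. x i k \<longrightarrow> x i j)"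
  shows "PP (\<lambda>i j. \<not> x i j)"
  using assms unfolding PP_def ex1_3 exists_3 forall_3
  apply (simp only: d3 simp_thms)
  by satx

lemma s3_nonneg: "M \<in> s3 \<Longrightarrow> M $ i $ j \<ge> 0" by (simp add: s3_def)
lemma s3_sum: "M \<in> s3 \<Longrightarrow> (\<Sum>i\<in>UNIV. M $ i $ j) = 1" by (simp add: s3_def)

lemma s3_le1: assumes "M \<in> s3" shows "M $ i $ j \<le> 1"
proof -
  have "M $ i $ j \<le> (\<Sum>i\<in>UNIV. M $ i $ j)"
    by (rule member_le_sum) (auto simp: s3_nonneg[OF assms])
  then show ?thesis using s3_sum[OF assms] by simp
qed

lemma s3_pos: assumes "M \<in> s3" shows "\<exists>i. M $ i $ j > 0"
proof (rule ccontr)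
  assume "\<not> ?thesis"
  then have "\<forall>i. M $ i $ j = 0" using s3_nonneg[OF assms] by (metis order_le_less)
  then show False using s3_sum[OF assms, of j] by simp
qed

lemma s3_single:
  assumes "M \<in> s3" "\<forall>i'. M $ i' $ j > 0 \<longleftrightarrow> i' = i"
  shows "M $ i' $ j = (if i' = i then 1 else 0)"
proof -
  have z: "\<forall>i'. i' \<noteq> i \<longrightarrow> M $ i' $ j = 0" using assms s3_nonneg[OF assms(1)]
    by (metis order_le_less)
  have "(\<Sum>i'\<in>UNIV. M $ i' $ j) = M $ i $ j"
  proof -
    have "(\<Sum>i'\<in>UNIV. M $ i' $ j) = (\<Sum>i'\<in>UNIV. if i' = i then M $ i $ j else 0)"
      using z by (intro sum.cong) auto
    then show ?thesis by simp
  qed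
  then show ?thesis using s3_sum[OF assms(1), of j] z by auto
qed

definition PM :: "(3 \<Rightarrow> 3) \<Rightarrow> real^3^3" where
  "PM p = (\<chi> i j. if i = p j then 1 else 0)"

lemma perm_iff: assumes "M \<in> s3" shows "perm_mat M \<longleftrightarrow> PP (\<lambda>i j. M $ i $ j > 0)"
proof
  assume "perm_mat M"
  then obtain p where p: "p permutes UNIV" "M = (\<chi> i j. if i = p j then 1 else 0)"
    unfolding perm_mat_def by blast
  have "\<forall>i. \<exists>k. i = p k" using permutes_surj[OF p(1)] by (metis surj_def)
  then show "PP (\<lambda>i j. M $ i $ j > 0)" unfolding PP_def p(2) by auto
next
  assume pp: "PP (\<lambda>i j. M $ i $ j > 0)"
  define p where "p j = (THE i. M $ i $ j > 0)" for j
  have pj: "M $ i $ j > 0 \<longleftrightarrow> i = p j" for i j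
    using pp unfolding PP_def p_def by (metis (mono_tags, lifting) theI')
  have "surj p" using pp unfolding PP_def pj by auto
  then have "inj p" by (simp add: finite_UNIV_surj_inj)
  then have "p permutes UNIV" using \<open>surj p\<close>
    by (intro bij_imp_permutes) (auto simp: bij_betw_def)
  moreover have "M = (\<chi> i j. if i = p j then 1 else 0)"
    using s3_single[OF assms] pj by (simp add: vec_eq_iff)
  ultimately show "perm_mat M" unfolding perm_mat_def by blast
qed

lemma not_perm_two:
  assumes "M \<in> s3" "M $ a $ l > 0" "M $ b $ l > 0" "a \<noteq> b"
  shows "\<not> perm_mat M"
  using assms unfolding perm_iff[OF assms(1)] PP_def by blast

lemma not_perm_row:
  assumes "M \<in> s3" "\<forall>l. M $ a $ l = 0"
  shows "\<not> perm_mat M"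
  using assms(2) unfolding perm_iff[OF assms(1)] PP_def by (metis less_irrefl)

lemma PM_left:
  assumes "p permutes UNIV"
  shows "(PM p ** M) $ i $ j = M $ (inv p i) $ j"
proof -
  have eq: "(i = p k) = (k = inv p i)" for k using permutes_inv_eq[OF assms, of i k] by auto
  have "(PM p ** M) $ i $ j = (\<Sum>k\<in>UNIV. (if k = inv p i then M $ k $ j else 0))"
    unfolding PM_def matrix_matrix_mult_def
    by (simp only: vec_lambda_beta eq) (rule sum.cong, auto)
  then show ?thesis by simp
qed

lemma mult_R:
  "(M ** (\<chi> i j. if i = q j then 1 else 0)) $ i $ j = (M $ i $ (q j) :: real)"
  unfolding matrix_matrix_mult_def by (simp add: if_distrib cong: if_cong)

lemma prod_pos:
  assumes "B \<in> s3" "C \<in> s3"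
  shows "(B ** C) $ i $ j > 0 \<longleftrightarrow> (\<exists>k. B $ i $ k > 0 \<and> C $ k $ j > 0)"
proof -
  have n: "\<And>k. B $ i $ k \<ge> 0" "\<And>k. C $ k $ j \<ge> 0" using assms s3_nonneg by auto
  have e: "(B ** C) $ i $ j = B $ i $ 1 * C $ 1 $ j + B $ i $ 2 * C $ 2 $ j + B $ i $ 3 * C $ 3 $ j"
    unfolding matrix_matrix_mult_def by (simp add: sum_3)
  have m: "\<And>k. B $ i $ k * C $ k $ j \<ge> 0" using n by simp
  have q: "\<And>k. B $ i $ k * C $ k $ j > 0 \<longleftrightarrow> B $ i $ k > 0 \<and> C $ k $ j > 0"
    using n by (smt (verit) mult_pos_pos mult_nonneg_nonneg zero_less_mult_iff)
  show ?thesis unfolding e exists_3 using m[of 1] m[of 2] m[of 3] q[of 1] q[of 2] q[of 3] by linarith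
qed

lemma mat1_eq: "(mat 1 :: real^3^3) = (\<chi> i j. if i = id j then 1 else 0)"
  by (simp add: mat_def)

lemma mat1_s3: "(mat 1 :: real^3^3) \<in> s3"
  unfolding s3_def mat1_eq by simp

lemma mat1_perm: "perm_mat (mat 1 :: real^3^3)"
  unfolding perm_mat_def mat1_eq using permutes_id[of UNIV] by blast

lemma sdelta: "(\<Sum>m\<in>UNIV. (f m::real) * (if m = (k::3) then c else 0)) = f k * c"
proof -
  have "(\<Sum>m\<in>UNIV. (f m::real) * (if m = k then c else 0)) = (\<Sum>m\<in>UNIV. if m = k then f k * c else 0)"
    by (rule sum.cong) auto
  also have "\<dots> = f k * c" by (rule trans[OF sum.delta]) (simp_all only: UNIV_I if_True finite)
  finally show ?thesis .
qed

lemma K1: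
  assumes A: "A \<in> s3" and np: "\<not> perm_mat A" and jk: "j \<noteq> k" and eq: "\<forall>i. A $ i $ j = A $ i $ k"
  shows "\<not> indivisible A"
proof
  assume ind: "indivisible A"
  define C :: "real^3^3" where "C = (\<chi> m l. if l = j then (if m = k then 1 else 0) else (if m = l then 1 else 0))"
  have C: "C \<in> s3" unfolding s3_def C_def
  proof (intro CollectI conjI allI)
    fix l show "(\<Sum>i\<in>UNIV. (\<chi> m l. if l = j then (if m = k then 1 else 0) else (if m = l then 1 else 0)) $ i $ l) = (1::real)"
      by (cases "l = j") auto
  qed auto
  have "(A ** C) $ i $ l = A $ i $ l" for i l
  proof (cases "l = j")
    case True
    have "(A ** C) $ i $ l = (\<Sum>m\<in>UNIV. A $ i $ m * (if m = k then 1 else 0))"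
      unfolding matrix_matrix_mult_def C_def True by simp
    then show ?thesis unfolding sdelta using eq True by simp
  next
    case False
    have "(A ** C) $ i $ l = (\<Sum>m\<in>UNIV. A $ i $ m * (if m = l then 1 else 0))"
      unfolding matrix_matrix_mult_def C_def using False by simp
    then show ?thesis unfolding sdelta by simp
  qed
  then have "A = A ** C" by (simp add: vec_eq_iff)
  moreover have "\<not> perm_mat C"
    by (rule not_perm_row[OF C, of j]) (use jk in \<open>auto simp: C_def\<close>)
  ultimately show False using ind A C np unfolding indivisible_def by blast
qed

lemma K3:
  assumes A: "A \<in> s3" and jk: "j \<noteq> k" and sub: "\<forall>i. A $ i $ k > 0 \<longrightarrow> A $ i $ j > 0"
    and i12: "i1 \<noteq> i2" "A $ i1 $ j > 0" "A $ i2 $ j > 0"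
  shows "\<not> indivisible A"
proof
  assume ind: "indivisible A"
  define f where "f i = (if A $ i $ j > 0 then A $ i $ j else 1)" for i
  define e where "e = min (f 1) (min (f 2) (f 3)) / 2"
  have f: "0 < f i \<and> f i \<le> 1" for i using s3_le1[OF A] by (auto simp: f_def)
  have ef: "e \<le> f i / 2" for i using exhaust_3[of i] by (auto simp: e_def)
  have e0: "0 < e" using f[of 1] f[of 2] f[of 3] by (simp add: e_def)
  have e1: "e < 1" using ef[of 1] f[of 1] by linarith
  have eA: "A $ i $ j > 0 \<Longrightarrow> e < A $ i $ j" for i using ef[of i] f[of i] by (simp add: f_def)
  define B :: "real^3^3" where "B = (\<chi> i l. if l = j then (A $ i $ j - e * A $ i $ k) / (1 - e) else A $ i $ l)"
  define C :: "real^3^3" where "C = (\<chi> m l. if l = j then (if m = j then 1 - e else 0) + (if m = k then e else 0)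
       else (if m = l then 1 else 0))"
  have Bj: "B $ i $ j > 0" if "A $ i $ j > 0" for i
  proof -
    have "A $ i $ k \<le> 1" by (rule s3_le1[OF A])
    then have "e * A $ i $ k \<le> e" using e0 by (simp add: mult_left_le)
    then have "A $ i $ j - e * A $ i $ k > 0" using eA[OF that] by linarith
    then show ?thesis using e1 by (simp add: B_def)
  qed
  have Bnn: "B $ i $ l \<ge> 0" for i l
  proof (cases "l = j")
    case True
    show ?thesis
    proof (cases "A $ i $ j > 0")
      case True then show ?thesis using Bj[of i] \<open>l = j\<close> by simp
    next
      case False
      then have "A $ i $ j = 0" using s3_nonneg[OF A, of i j] by simp
      moreover have "A $ i $ k = 0" using sub False s3_nonneg[OF A, of i k] by (metis order_le_less)
      ultimately show ?thesis by (simp add: B_def \<open>l = j\<close>)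
    qed
  next
    case False then show ?thesis using s3_nonneg[OF A] by (simp add: B_def)
  qed
  have Bsum: "(\<Sum>i\<in>UNIV. B $ i $ l) = 1" for l
  proof (cases "l = j")
    case True
    have "(\<Sum>i\<in>UNIV. B $ i $ l) = (\<Sum>i\<in>UNIV. A $ i $ j - e * A $ i $ k) / (1 - e)"
      by (simp add: B_def True sum_divide_distrib)
    also have "\<dots> = (1 - e) / (1 - e)"
      by (simp add: sum_subtractf sum_distrib_left[symmetric] s3_sum[OF A])
    finally show ?thesis using e1 by simp
  next
    case False then show ?thesis using s3_sum[OF A] by (simp add: B_def)
  qed
  have B: "B \<in> s3" unfolding s3_def using Bnn Bsum by auto
  have C: "C \<in> s3" unfolding s3_def
  proof (intro CollectI conjI allI)
    fix l show "(\<Sum>i\<in>UNIV. C $ i $ l) = 1"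
      by (cases "l = j") (use jk in \<open>simp_all add: C_def sum.distrib\<close>)
  next
    fix i l show "C $ i $ l \<ge> 0" using e0 e1 by (simp add: C_def)
  qed
  have "A = B ** C"
  proof -
    have "(B ** C) $ i $ l = A $ i $ l" for i l
    proof (cases "l = j")
      case True
      have "(B ** C) $ i $ l = (\<Sum>m\<in>UNIV. B $ i $ m * (if m = j then 1 - e else 0) + B $ i $ m * (if m = k then e else 0))"
        unfolding matrix_matrix_mult_def C_def True by (simp add: distrib_left)
      also have "\<dots> = B $ i $ j * (1 - e) + B $ i $ k * e" by (simp only: sum.distrib sdelta)
      also have "\<dots> = A $ i $ l" using e1 jk True by (simp add: B_def field_simps)
      finally show ?thesis .
    next
      case False
      have "(B ** C) $ i $ l = (\<Sum>m\<in>UNIV. B $ i $ m * (if m = l then 1 else 0))"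
        unfolding matrix_matrix_mult_def C_def using False by simp
      then show ?thesis unfolding sdelta using False by (simp add: B_def)
    qed
    then show ?thesis by (simp add: vec_eq_iff)
  qed
  moreover have "\<not> perm_mat B" by (rule not_perm_two[OF B Bj[OF i12(2)] Bj[OF i12(3)] i12(1)])
  moreover have "\<not> perm_mat C" by (rule not_perm_two[OF C, of j j k]) (use e0 e1 jk in \<open>auto simp: C_def\<close>)
  ultimately show False using ind B C unfolding indivisible_def by blast
qed


theorem theorem1:
  fixes A :: "real^3^3"
  assumes "A \<in> s3"
  shows "indivisible A \<longleftrightarrow>
    (\<exists>P Q. perm_mat P \<and> perm_mat Q \<and> P ** sgn_mat A ** Q = J0)"
proof
  assume ind: "indivisible A"
  have np: "\<not> perm_mat A"
  proof
    assume "perm_mat A"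
    moreover have "A = A ** mat 1" by simp
    ultimately show False using ind assms mat1_s3 mat1_perm unfolding indivisible_def by blast
  qed
  have anti: "\<forall>j k. j \<noteq> k \<longrightarrow> \<not>(\<forall>i. A $ i $ k > 0 \<longrightarrow> A $ i $ j > 0)"
  proof (intro allI impI notI)
    fix j k assume jk: "j \<noteq> (k::3)" and sub: "\<forall>i. A $ i $ k > 0 \<longrightarrow> A $ i $ j > 0"
    show False
    proof (cases "\<exists>i1 i2. i1 \<noteq> i2 \<and> A $ i1 $ j > 0 \<and> A $ i2 $ j > 0")
      case True
      then obtain i1 i2 where "i1 \<noteq> i2" "A $ i1 $ j > 0" "A $ i2 $ j > 0" by blast
      from K3[OF assms jk sub this] ind show False by blast
    next
      case False
      obtain i0 where i0: "A $ i0 $ j > 0" using s3_pos[OF assms] by blast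
      have hj: "\<forall>i. A $ i $ j > 0 \<longleftrightarrow> i = i0" using False i0 by blast
      obtain i1 where i1: "A $ i1 $ k > 0" using s3_pos[OF assms] by blast
      have hk: "\<forall>i. A $ i $ k > 0 \<longleftrightarrow> i = i0" using hj sub i1 by metis
      have "\<forall>i. A $ i $ j = A $ i $ k"
        using s3_single[OF assms hj] s3_single[OF assms hk] by simp
      from K1[OF assms np jk this] ind show False by blast
    qed
  qed
  have ppA: "\<not> PP (\<lambda>i j. A $ i $ j > 0)" using np perm_iff[OF assms] by simp
  have pz: "PP (\<lambda>i j. \<not> A $ i $ j > 0)"
    by (rule core2[OF _ ppA anti]) (use s3_pos[OF assms] in blast)
  define Z :: "real^3^3" where "Z = (\<chi> i j. if A $ i $ j > 0 then 0 else 1)"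
  have Zs: "Z \<in> s3" unfolding s3_def
  proof (intro CollectI conjI allI)
    fix j
    have "\<exists>!i. \<not> A $ i $ j > 0" using pz unfolding PP_def by blast
    then show "(\<Sum>i\<in>UNIV. Z $ i $ j) = 1" unfolding Z_def ex1_3 by (auto simp: sum_3)
  qed (simp add: Z_def)
  have "perm_mat Z" unfolding perm_iff[OF Zs] using pz by (simp add: Z_def)
  then obtain r where r: "r permutes UNIV" "Z = (\<chi> i j. if i = r j then 1 else 0)"
    unfolding perm_mat_def by blast
  have Ar: "A $ i $ j > 0 \<longleftrightarrow> i \<noteq> r j" for i j
  proof -
    have "Z $ i $ j = (if i = r j then 1 else 0)" using r(2) by simp
    then show ?thesis unfolding Z_def by (auto split: if_splits)
  qed
  have sg: "sgn_mat A $ i $ j = (if i = r j then 0 else 1)" for i j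
    using Ar[of i j] s3_nonneg[OF assms, of i j] by (auto simp: sgn_mat_def)
  have ri: "inv r permutes UNIV" by (rule permutes_inv[OF r(1)])
  have "PM (inv r) ** sgn_mat A ** mat 1 = J0"
  proof -
    have "(PM (inv r) ** sgn_mat A) $ i $ j = J0 $ i $ j" for i j
      unfolding PM_left[OF ri] permutes_inv_inv[OF r(1)] sg J0_def
      using permutes_inj[OF r(1)] by (simp add: inj_eq)
    then show ?thesis by (simp add: vec_eq_iff)
  qed
  moreover have "perm_mat (PM (inv r))" unfolding perm_mat_def PM_def using ri by blast
  ultimately show "\<exists>P Q. perm_mat P \<and> perm_mat Q \<and> P ** sgn_mat A ** Q = J0"
    using mat1_perm by blast
next
  assume "\<exists>P Q. perm_mat P \<and> perm_mat Q \<and> P ** sgn_mat A ** Q = J0"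
  then obtain p q where p: "p permutes UNIV" and q: "q permutes UNIV"
    and eq: "PM p ** sgn_mat A ** (\<chi> i j. if i = q j then 1 else 0) = J0"
    unfolding perm_mat_def PM_def by blast
  have ent: "sgn_mat A $ (inv p a) $ (q b) = J0 $ a $ b" for a b
    using arg_cong[OF eq, of "\<lambda>M. M $ a $ b"] unfolding mult_R PM_left[OF p] .
  have hz: "A $ i $ j > 0 \<longleftrightarrow> p i \<noteq> inv q j" for i j
  proof -
    have "sgn_mat A $ i $ j = J0 $ (p i) $ (inv q j)"
      using ent[of "p i" "inv q j"] by (simp add: permutes_inverses[OF p] permutes_inverses[OF q])
    then have "sgn (A $ i $ j) = (if p i = inv q j then 0 else 1)" by (simp add: sgn_mat_def J0_def)
    then show ?thesis using s3_nonneg[OF assms, of i j]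
      by (cases "A $ i $ j > 0") (auto split: if_splits)
  qed
  show "indivisible A" unfolding indivisible_def
  proof (intro ballI impI)
    fix B C assume B: "B \<in> s3" and C: "C \<in> s3" and ABC: "A = B ** C"
    have "(PP (\<lambda>i k. B $ i $ k > 0) \<and> \<not> PP (\<lambda>k j. C $ k $ j > 0)) \<or>
          (\<not> PP (\<lambda>i k. B $ i $ k > 0) \<and> PP (\<lambda>k j. C $ k $ j > 0))"
    proof (rule core1[where z = "\<lambda>i j. p i = inv q j"])
      show "\<forall>j. \<exists>k. C $ k $ j > 0" using s3_pos[OF C] by blast
      show "\<forall>k. \<exists>i. B $ i $ k > 0" using s3_pos[OF B] by blast
      show "\<forall>i j. (p i = inv q j) \<longleftrightarrow> \<not>(\<exists>k. B $ i $ k > 0 \<and> C $ k $ j > 0)"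
        using hz prod_pos[OF B C] ABC by blast
      show "\<forall>j. \<exists>!i. p i = inv q j"
        using permutes_inverses[OF p] by metis
      show "\<forall>i. \<exists>j. p i = inv q j"
        using permutes_inverses[OF q] by metis
    qed
    then show "(perm_mat B \<and> \<not> perm_mat C) \<or> (\<not> perm_mat B \<and> perm_mat C)"
      unfolding perm_iff[OF B] perm_iff[OF C] .
  qed
qed

end
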